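(* For $n\ge 3$ let $C_n$ be the cycle graph with $n$ vertices, and let $\mathbb{Z}$ denote the one-dimensional integer lattice (the infinite 2-regular path graph on vertex set $\mathbb{Z}$ with edges $\{k,k+1\}$). Then for every complex $u$ with $|u|<1$, \[ \lim_{n\to\infty}\zeta_{C_n}(u)=\zeta_{\mathbb{Z}}(u). \]
   Context: For a vertex transitive $(q+1)$-regular graph $G$ and a fixed vertex $x_0$, the generalized Ihara zeta function is $\zeta_G(u)=\exp\big(\sum_{m\ge1}\frac{N^0_m}{m}u^m\big)$, where $N^0_m$ is the number of reduced $x_0$-cycles of length $m$ in $G$. Here a path of length $m$ is a sequence $(e_1,\ldots,e_m)$ of oriented edges (arcs) with the terminus of $e_i$ equal to the origin of $e_{i+1}$; it has a backtracking if $e_{i+1}=e_i^{-1}$ for some $i$ (where $e^{-1}$ is the reversed arc); an $x_0$-cycle is a path starting and ending at $x_0$; it has a tail if $e_m=e_1^{-1}$; it is reduced if it has neither a backtracking nor a tail. *)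

theory Defs
  imports Complex_Main
begin

text \<open>A graph is given by a symmetric adjacency relation on a vertex type.
  Arcs (oriented edges) are pairs (x, y) with adj x y; a path is a list of arcs.\<close>

definition rev_arc :: "'a \<times> 'a \<Rightarrow> 'a \<times> 'a" where
  "rev_arc e = (snd e, fst e)"

definition is_path :: "('a \<Rightarrow> 'a \<Rightarrow> bool) \<Rightarrow> ('a \<times> 'a) list \<Rightarrow> bool" where
  "is_path adj p \<longleftrightarrow> (\<forall>e\<in>set p. adj (fst e) (snd e)) \<and>
     (\<forall>i. Suc i < length p \<longrightarrow> snd (p ! i) = fst (p ! Suc i))"

definition is_cycle_at :: "('a \<Rightarrow> 'a \<Rightarrow> bool) \<Rightarrow> 'a \<Rightarrow> ('a \<times> 'a) list \<Rightarrow> bool" where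
  "is_cycle_at adj x0 p \<longleftrightarrow> is_path adj p \<and> p \<noteq> [] \<and> fst (hd p) = x0 \<and> snd (last p) = x0"

definition has_backtracking :: "('a \<times> 'a) list \<Rightarrow> bool" where
  "has_backtracking p \<longleftrightarrow> (\<exists>i. Suc i < length p \<and> p ! Suc i = rev_arc (p ! i))"

definition has_tail :: "('a \<times> 'a) list \<Rightarrow> bool" where
  "has_tail p \<longleftrightarrow> p \<noteq> [] \<and> last p = rev_arc (hd p)"

definition reduced_cycles :: "('a \<Rightarrow> 'a \<Rightarrow> bool) \<Rightarrow> 'a \<Rightarrow> nat \<Rightarrow> ('a \<times> 'a) list set" where
  "reduced_cycles adj x0 m = {p. length p = m \<and> is_cycle_at adj x0 p \<and>
      \<not> has_backtracking p \<and> \<not> has_tail p}"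

definition num_reduced_cycles :: "('a \<Rightarrow> 'a \<Rightarrow> bool) \<Rightarrow> 'a \<Rightarrow> nat \<Rightarrow> nat" where
  "num_reduced_cycles adj x0 m = card (reduced_cycles adj x0 m)"

definition ihara_zeta :: "('a \<Rightarrow> 'a \<Rightarrow> bool) \<Rightarrow> 'a \<Rightarrow> complex \<Rightarrow> complex" where
  "ihara_zeta adj x0 u =
     exp (\<Sum>m. of_nat (num_reduced_cycles adj x0 (Suc m)) / of_nat (Suc m) * u ^ Suc m)"

definition cycle_adj :: "nat \<Rightarrow> nat \<Rightarrow> nat \<Rightarrow> bool" where
  "cycle_adj n x y \<longleftrightarrow> x < n \<and> y < n \<and> (y = Suc x mod n \<or> x = Suc y mod n)"

definition int_adj :: "int \<Rightarrow> int \<Rightarrow> bool" where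
  "int_adj x y \<longleftrightarrow> \<bar>x - y\<bar> = 1"

end

theory Submission
  imports Defs
begin

lemma cyc_adj_int:
  assumes "n > 0"
  shows "cycle_adj n (nat (k mod int n)) y \<longleftrightarrow> y = nat ((k+1) mod int n) \<or> y = nat ((k-1) mod int n)"
proof -
  define x where "x = nat (k mod int n)"
  have xk: "int x = k mod int n" using assms by (simp add: x_def)
  have xn: "x < n" using assms xk by (metis Euclidean_Rings.pos_mod_bound of_nat_0_less_iff of_nat_less_iff)
  have A: "y = Suc x mod n \<longleftrightarrow> y = nat ((k+1) mod int n)"
  proof -
    have "int (Suc x mod n) = (k+1) mod int n" using xk
      by (metis add.commute mod_add_right_eq of_nat_Suc of_nat_mod)
    then show ?thesis by auto
  qed
  have B: "(y < n \<and> x = Suc y mod n) \<longleftrightarrow> y = nat ((k-1) mod int n)"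
  proof
    assume h: "y < n \<and> x = Suc y mod n"
    then have "k mod int n = (int y + 1) mod int n" using xk
      by (metis add.commute of_nat_Suc of_nat_mod)
    then have "(k - 1) mod int n = (int y + 1 - 1) mod int n" by (metis mod_diff_left_eq)
    then have "(k - 1) mod int n = int y" using h by simp
    then show "y = nat ((k-1) mod int n)" by simp
  next
    assume h: "y = nat ((k-1) mod int n)"
    then have yk: "int y = (k-1) mod int n" using assms by simp
    then have "y < n" using assms by (metis Euclidean_Rings.pos_mod_bound of_nat_0_less_iff of_nat_less_iff)
    moreover have "int (Suc y mod n) = int x"
    proof -
      have "int (Suc y mod n) = (int y + 1) mod int n" by (simp add: of_nat_mod add.commute)
      also have "\<dots> = ((k-1) + 1) mod int n" using yk by (metis mod_add_left_eq)
      finally show ?thesis using xk by simp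
    qed
    ultimately show "y < n \<and> x = Suc y mod n" by simp
  qed
  have yA: "Suc x mod n < n" using assms by simp
  have "cycle_adj n x y \<longleftrightarrow> (y = Suc x mod n) \<or> (y < n \<and> x = Suc y mod n)"
    using xn yA unfolding cycle_adj_def by auto
  then show ?thesis using A B by (simp add: x_def)
qed

lemma nb_path_form:
  fixes g :: "int \<Rightarrow> 'a"
  assumes adjg: "\<And>k y. adj (g k) y \<longleftrightarrow> y = g (k+1) \<or> y = g (k-1)"
    and P: "is_path adj p" and NB: "\<not> has_backtracking p" and ne: "p \<noteq> []"
    and h0: "fst (hd p) = g 0"
  shows "\<exists>d\<in>{1,-1::int}. \<forall>i<length p. p!i = (g (d*int i), g (d*int (Suc i)))"
proof -
  have p0: "fst (p!0) = g 0" using h0 ne by (simp add: hd_conv_nth)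
  have "adj (fst (p!0)) (snd (p!0))" using P ne unfolding is_path_def by (metis nth_mem length_greater_0_conv)
  then have "snd (p!0) = g 1 \<or> snd (p!0) = g (-1)" using p0 adjg by simp
  then obtain d where d: "d \<in> {1,-1::int}" "snd (p!0) = g d" by auto
  have "\<forall>i. i < length p \<longrightarrow> p!i = (g (d*int i), g (d*int (Suc i)))"
  proof
    fix i show "i < length p \<longrightarrow> p!i = (g (d*int i), g (d*int (Suc i)))"
    proof (induction i)
      case 0
      show ?case using p0 d by (simp add: prod_eq_iff)
    next
      case (Suc i)
      show ?case
      proof
        assume si: "Suc i < length p"
        then have IH: "p!i = (g (d*int i), g (d*int (Suc i)))" using Suc.IH by simp
        have f: "fst (p!Suc i) = g (d*int (Suc i))" using P si IH unfolding is_path_def by auto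
        have "adj (fst (p!Suc i)) (snd (p!Suc i))" using P si unfolding is_path_def by (metis nth_mem)
        then have s: "snd (p!Suc i) = g (d*int (Suc i) + 1) \<or> snd (p!Suc i) = g (d*int (Suc i) - 1)"
          using f adjg by simp
        have "p!Suc i \<noteq> rev_arc (p!i)" using NB si unfolding has_backtracking_def by blast
        then have ne2: "snd (p!Suc i) \<noteq> g (d * int i)" using f IH unfolding rev_arc_def by (auto simp: prod_eq_iff)
        have "snd (p!Suc i) = g (d*int (Suc (Suc i)))"
          using d s ne2 by (auto simp: algebra_simps)
        then show "p!Suc i = (g (d*int (Suc i)), g (d*int (Suc (Suc i))))" using f by (simp add: prod_eq_iff)
      qed
    qed
  qed
  then show ?thesis using d by blast
qed

lemma int_no_cycles: "reduced_cycles int_adj (0::int) m = {}"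
proof (rule ccontr)
  assume "reduced_cycles int_adj (0::int) m \<noteq> {}"
  then obtain p where p: "p \<in> reduced_cycles int_adj 0 m" by blast
  then have c: "is_cycle_at int_adj 0 p" "\<not> has_backtracking p" unfolding reduced_cycles_def by auto
  have adjg: "\<And>k y. int_adj ((\<lambda>k. k) k) y \<longleftrightarrow> y = (\<lambda>k. k) (k+1) \<or> y = (\<lambda>k. k) (k-1)"
    by (auto simp: int_adj_def abs_if)
  have "\<exists>d\<in>{1,-1::int}. \<forall>i<length p. p!i = (d*int i, d*int (Suc i))"
    by (rule nb_path_form[where g="\<lambda>k. k", OF adjg]) (use c in \<open>auto simp: is_cycle_at_def\<close>)
  then obtain d where d: "d \<in> {1,-1::int}" "\<forall>i<length p. p!i = (d*int i, d*int (Suc i))"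
    by blast
  have ne: "p \<noteq> []" using c unfolding is_cycle_at_def by auto
  have "last p = p!(length p - 1)" using ne by (simp add: last_conv_nth)
  then have "snd (last p) = d * int (length p)" using d(2) ne
    by (metis Suc_pred' diff_less length_greater_0_conv less_numeral_extra(1) snd_conv)
  moreover have "snd (last p) = 0" using c unfolding is_cycle_at_def by auto
  ultimately show False using d(1) ne by auto
qed

lemma int_zeta: "ihara_zeta int_adj 0 u = 1"
  unfolding ihara_zeta_def num_reduced_cycles_def int_no_cycles by simp

lemma cyc_cycles_subset:
  assumes n: "n \<ge> 3"
  shows "reduced_cycles (cycle_adj n) 0 m \<subseteq>
     (\<lambda>d. map (\<lambda>i. (nat ((d*int i) mod int n), nat ((d*int (Suc i)) mod int n))) [0..<m]) ` {1,-1}"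
    and "m < n \<Longrightarrow> reduced_cycles (cycle_adj n) 0 m = {}"
proof -
  define g where "g = (\<lambda>k::int. nat (k mod int n))"
  have adjg: "\<And>k y. cycle_adj n (g k) y \<longleftrightarrow> y = g (k+1) \<or> y = g (k-1)"
    unfolding g_def using cyc_adj_int[of n] n by simp
  have key: "\<exists>d\<in>{1,-1::int}. p = map (\<lambda>i. (g (d*int i), g (d*int (Suc i)))) [0..<m]
       \<and> int n dvd int m \<and> m > 0"
    if p: "p \<in> reduced_cycles (cycle_adj n) 0 m" for p
  proof -
    have c: "is_cycle_at (cycle_adj n) 0 p" "\<not> has_backtracking p" "length p = m"
      using p unfolding reduced_cycles_def by auto
    have g0: "g 0 = 0" by (simp add: g_def)
    have "\<exists>d\<in>{1,-1::int}. \<forall>i<length p. p!i = (g (d*int i), g (d*int (Suc i)))"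
      by (rule nb_path_form[where g=g, OF adjg]) (use c g0 in \<open>auto simp: is_cycle_at_def\<close>)
    then obtain d where d: "d \<in> {1,-1::int}" "\<forall>i<length p. p!i = (g (d*int i), g (d*int (Suc i)))"
      by blast
    have ne: "p \<noteq> []" using c unfolding is_cycle_at_def by auto
    have eq: "p = map (\<lambda>i. (g (d*int i), g (d*int (Suc i)))) [0..<m]"
      using d(2) c(3) by (intro nth_equalityI) auto
    have "last p = p!(length p - 1)" using ne by (simp add: last_conv_nth)
    then have "snd (last p) = g (d * int (length p))" using d(2) ne
      by (metis Suc_pred' diff_less length_greater_0_conv less_numeral_extra(1) snd_conv)
    moreover have "snd (last p) = 0" using c unfolding is_cycle_at_def by auto
    ultimately have "nat ((d * int m) mod int n) = 0" using c(3) unfolding g_def by simp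
    moreover have "(d * int m) mod int n \<ge> 0" using n by simp
    ultimately have "(d * int m) mod int n = 0" by linarith
    then have "int n dvd d * int m" by auto
    then have "int n dvd int m" using d(1) by auto
    then show ?thesis using eq d(1) ne c(3) by auto
  qed
  show "reduced_cycles (cycle_adj n) 0 m \<subseteq>
     (\<lambda>d. map (\<lambda>i. (nat ((d*int i) mod int n), nat ((d*int (Suc i)) mod int n))) [0..<m]) ` {1,-1}"
  proof
    fix p assume "p \<in> reduced_cycles (cycle_adj n) 0 m"
    from key[OF this] obtain d where "d \<in> {1,-1::int}" "p = map (\<lambda>i. (g (d*int i), g (d*int (Suc i)))) [0..<m]"
      by blast
    then show "p \<in> (\<lambda>d. map (\<lambda>i. (nat ((d*int i) mod int n), nat ((d*int (Suc i)) mod int n))) [0..<m]) ` {1,-1}"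
      unfolding g_def by (intro rev_image_eqI[of d]) auto
  qed
  show "m < n \<Longrightarrow> reduced_cycles (cycle_adj n) 0 m = {}"
  proof (rule ccontr)
    assume "m < n" "reduced_cycles (cycle_adj n) 0 m \<noteq> {}"
    then obtain p where "p \<in> reduced_cycles (cycle_adj n) 0 m" by blast
    from key[OF this] have "int n dvd int m" "m > 0" by auto
    then have "n \<le> m" by (simp add: dvd_imp_le)
    with \<open>m < n\<close> show False by simp
  qed
qed

lemma cyc_num_le2: "n \<ge> 3 \<Longrightarrow> num_reduced_cycles (cycle_adj n) 0 m \<le> 2"
proof -
  assume n: "n \<ge> 3"
  let ?F = "(\<lambda>d. map (\<lambda>i. (nat ((d*int i) mod int n), nat ((d*int (Suc i)) mod int n))) [0..<m]) ` {1,-1::int}"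
  have "num_reduced_cycles (cycle_adj n) 0 m \<le> card ?F"
    unfolding num_reduced_cycles_def by (rule card_mono) (use cyc_cycles_subset(1)[OF n] in auto)
  also have "\<dots> \<le> card {1,-1::int}" by (rule card_image_le) simp
  also have "\<dots> = 2" by simp
  finally show ?thesis .
qed

lemma cyc_num_0: "n \<ge> 3 \<Longrightarrow> m < n \<Longrightarrow> num_reduced_cycles (cycle_adj n) 0 m = 0"
  unfolding num_reduced_cycles_def using cyc_cycles_subset(2) by simp


lemma sum_bound:
  fixes N :: "nat \<Rightarrow> nat" and u :: complex
  assumes N2: "\<And>m. N m \<le> 2" and N0: "\<And>m. m < n \<Longrightarrow> N m = 0" and u: "norm u < 1" and n: "n \<ge> 1"
  shows "norm (\<Sum>m. of_nat (N (Suc m)) / of_nat (Suc m) * u ^ Suc m) \<le> 2 * norm u ^ n / (1 - norm u)"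
proof -
  define r where "r = norm u"
  define a where "a = (\<lambda>m. of_nat (N (Suc m)) / of_nat (Suc m) * u ^ Suc m :: complex)"
  define k where "k = n - 1"
  have r0: "r \<ge> 0" "r < 1" using u by (auto simp: r_def)
  have na: "norm (a m) \<le> 2 * r ^ Suc m" for m
  proof -
    have "norm (a m) = real (N (Suc m)) / real (Suc m) * r ^ Suc m"
      unfolding a_def r_def norm_mult norm_divide norm_power norm_of_nat by simp
    also have "\<dots> \<le> 2 * r ^ Suc m"
    proof (rule mult_right_mono)
      have "real (N (Suc m)) / real (Suc m) \<le> real (N (Suc m))"
        by (simp add: divide_le_eq mult_le_cancel_left1)
      also have "\<dots> \<le> 2" using N2[of "Suc m"] by simp
      finally show "real (N (Suc m)) / real (Suc m) \<le> 2" .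
    qed (use r0 in simp)
    finally show ?thesis .
  qed
  have sg: "summable (\<lambda>m. 2 * r ^ Suc m)"
    using summable_mult[OF summable_geometric[of r], of "2*r"] r0 by (simp add: mult.assoc)
  have sna: "summable (\<lambda>m. norm (a m))"
    by (rule summable_comparison_test[OF _ sg]) (use na in auto)
  have sa: "summable a" using sna summable_norm_cancel by blast
  have a0: "a m = 0" if "m < k" for m using that N0[of "Suc m"] n by (simp add: a_def k_def)
  have "suminf (\<lambda>m. a (m + k)) = suminf a - sum a {..<k}"
    by (rule suminf_minus_initial_segment[OF sa])
  also have "sum a {..<k} = 0" using a0 by simp
  finally have eq: "suminf a = suminf (\<lambda>m. a (m + k))" by simp
  have snak: "summable (\<lambda>m. norm (a (m + k)))"
    using summable_ignore_initial_segment[OF sna, of k] by simp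
  have sgk: "summable (\<lambda>m. (2 * r ^ n) * r ^ m)"
    using summable_mult[OF summable_geometric[of r], of "2*r^n"] r0 by simp
  have "norm (suminf a) \<le> suminf (\<lambda>m. norm (a (m + k)))"
    unfolding eq by (rule summable_norm[OF snak])
  also have "\<dots> \<le> suminf (\<lambda>m. (2 * r ^ n) * r ^ m)"
  proof (rule suminf_le[OF _ snak sgk])
    fix m
    have "norm (a (m + k)) \<le> 2 * r ^ Suc (m + k)" by (rule na)
    also have "Suc (m + k) = n + m" using n by (simp add: k_def)
    finally show "norm (a (m + k)) \<le> (2 * r ^ n) * r ^ m" by (simp add: power_add)
  qed
  also have "\<dots> = 2 * r ^ n / (1 - r)"
    using suminf_mult[OF summable_geometric[of r], of "2*r^n"] suminf_geometric[of r] r0 by simp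
  finally show ?thesis unfolding a_def r_def .
qed

theorem theorem4:
  fixes u :: complex
  assumes "norm u < 1"
  shows "(\<lambda>n. ihara_zeta (cycle_adj n) 0 u) \<longlonglongrightarrow> ihara_zeta int_adj 0 u"
proof -
  define S where "S = (\<lambda>n. \<Sum>m. of_nat (num_reduced_cycles (cycle_adj n) 0 (Suc m)) / of_nat (Suc m) * u ^ Suc m)"
  define g where "g = (\<lambda>n::nat. 2 * norm u ^ n / (1 - norm u))"
  have bnd: "norm (S n) \<le> g n" if "n \<ge> 3" for n
    unfolding S_def g_def
    by (rule sum_bound) (use that assms cyc_num_le2 cyc_num_0 in auto)
  have "g \<longlonglongrightarrow> 2 * 0 / (1 - norm u)"
    unfolding g_def by (intro tendsto_intros LIMSEQ_power_zero) (use assms in auto)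
  then have g0: "g \<longlonglongrightarrow> 0" by simp
  have "S \<longlonglongrightarrow> 0"
  proof (rule tendsto_0_le[OF g0, where K=1])
    show "\<forall>\<^sub>F n in sequentially. norm (S n) \<le> norm (g n) * 1"
      unfolding eventually_sequentially
      using bnd by (intro exI[of _ 3]) (auto intro: order_trans[OF _ abs_ge_self])
  qed
  then have "(\<lambda>n. exp (S n)) \<longlonglongrightarrow> exp 0" by (rule tendsto_exp)
  then show ?thesis unfolding int_zeta by (simp add: ihara_zeta_def S_def)
qed

end
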